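(* Let $0<m\le L$ and let $(\alpha,\beta,\gamma)$ be constant parameters such that, for every $f\in\mathcal{Q}_m^L$, the spectral radius of the matrix $A$ equals $\rho=1-1/T_s\in(0,1)$. Then $$\hat J_{\max}:=\max_{\lambda\in[m,L]}\hat J(\lambda)\ge\frac{\sigma_w^2}{2(1+\rho)^2}\,T_s,\qquad \hat J_{\min}:=\min_{\lambda\in[m,L]}\hat J(\lambda)\ge\sigma_w^2 .$$
   Context: $\mathcal{Q}_m^L$ is the class of quadratic functions $f(x)=\tfrac12x^TQx-q^Tx$ on $\mathbb{R}^n$ with $Q=Q^T\succ0$ whose largest eigenvalue is $L$ and smallest is $m$. For the two-step momentum algorithm $x^{t+2}=x^{t+1}+\beta(x^{t+1}-x^t)-\alpha\nabla f\big(x^{t+1}+\gamma(x^{t+1}-x^t)\big)+\sigma_w w^t$ ($w^t$ white noise with zero mean and identity covariance, $\sigma_w\ge0$), the state matrix is $A=\begin{bmatrix}0&I\\-\beta I+\gamma\alpha Q&(1+\beta)I-(1+\gamma)\alpha Q\end{bmatrix}$. For $\lambda>0$ define $a(\lambda)=\beta-\gamma\alpha\lambda$, $b(\lambda)=(1+\gamma)\alpha\lambda-(1+\beta)$, $d(\lambda)=a(\lambda)+b(\lambda)+1$, $l(\lambda)=a(\lambda)-b(\lambda)+1$, $h(\lambda)=1-a(\lambda)$, and $\hat J(\lambda)=\dfrac{\sigma_w^2\,(d(\lambda)+l(\lambda))}{2\,d(\lambda)\,h(\lambda)\,l(\lambda)}$ (the contribution of a Hessian eigenvalue $\lambda$ to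 the steady-state variance of $x^t-x^\star$). *)

theory Defs
  imports "Jordan_Normal_Form.Spectral_Radius"
begin

definition quad_class_hessian :: "real \<Rightarrow> real \<Rightarrow> nat \<Rightarrow> real mat \<Rightarrow> bool" where
  "quad_class_hessian m L n Q \<longleftrightarrow>
     Q \<in> carrier_mat n n \<and> transpose_mat Q = Q \<and>
     (\<forall>v \<in> carrier_vec n. v \<noteq> 0\<^sub>v n \<longrightarrow> v \<bullet> (Q *\<^sub>v v) > 0) \<and>
     eigenvalue Q L \<and> (\<forall>k. eigenvalue Q k \<longrightarrow> k \<le> L) \<and>
     eigenvalue Q m \<and> (\<forall>k. eigenvalue Q k \<longrightarrow> m \<le> k)"

definition state_matrix :: "real \<Rightarrow> real \<Rightarrow> real \<Rightarrow> nat \<Rightarrow> real mat \<Rightarrow> real mat" where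
  "state_matrix \<alpha> \<beta> \<gamma> n Q =
     four_block_mat (0\<^sub>m n n) (1\<^sub>m n)
       ((- \<beta>) \<cdot>\<^sub>m 1\<^sub>m n + (\<gamma> * \<alpha>) \<cdot>\<^sub>m Q)
       ((1 + \<beta>) \<cdot>\<^sub>m 1\<^sub>m n + (- ((1 + \<gamma>) * \<alpha>)) \<cdot>\<^sub>m Q)"

definition a_fun :: "real \<Rightarrow> real \<Rightarrow> real \<Rightarrow> real \<Rightarrow> real" where
  "a_fun \<alpha> \<beta> \<gamma> lam = \<beta> - \<gamma> * \<alpha> * lam"
definition b_fun :: "real \<Rightarrow> real \<Rightarrow> real \<Rightarrow> real \<Rightarrow> real" where
  "b_fun \<alpha> \<beta> \<gamma> lam = (1 + \<gamma>) * \<alpha> * lam - (1 + \<beta>)"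
definition d_fun :: "real \<Rightarrow> real \<Rightarrow> real \<Rightarrow> real \<Rightarrow> real" where
  "d_fun \<alpha> \<beta> \<gamma> lam = a_fun \<alpha> \<beta> \<gamma> lam + b_fun \<alpha> \<beta> \<gamma> lam + 1"
definition l_fun :: "real \<Rightarrow> real \<Rightarrow> real \<Rightarrow> real \<Rightarrow> real" where
  "l_fun \<alpha> \<beta> \<gamma> lam = a_fun \<alpha> \<beta> \<gamma> lam - b_fun \<alpha> \<beta> \<gamma> lam + 1"
definition h_fun :: "real \<Rightarrow> real \<Rightarrow> real \<Rightarrow> real \<Rightarrow> real" where
  "h_fun \<alpha> \<beta> \<gamma> lam = 1 - a_fun \<alpha> \<beta> \<gamma> lam"

definition J_hat :: "real \<Rightarrow> real \<Rightarrow> real \<Rightarrow> real \<Rightarrow> real \<Rightarrow> real" where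
  "J_hat \<sigma>w \<alpha> \<beta> \<gamma> lam =
     \<sigma>w\<^sup>2 * (d_fun \<alpha> \<beta> \<gamma> lam + l_fun \<alpha> \<beta> \<gamma> lam) /
     (2 * d_fun \<alpha> \<beta> \<gamma> lam * h_fun \<alpha> \<beta> \<gamma> lam * l_fun \<alpha> \<beta> \<gamma> lam)"

end

theory Submission imports Defs begin

definition diagQ :: "nat \<Rightarrow> (nat \<Rightarrow> real) \<Rightarrow> real mat" where
  "diagQ n w = mat n n (\<lambda>(i,j). if i = j then w i else 0)"

lemma diagQ_dim[simp]: "diagQ n w \<in> carrier_mat n n" "dim_row (diagQ n w) = n" "dim_col (diagQ n w) = n"
  unfolding diagQ_def by auto

lemma diagQ_idx[simp]: "i < n \<Longrightarrow> j < n \<Longrightarrow> diagQ n w $$ (i,j) = (if i = j then w i else 0)"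
  unfolding diagQ_def by auto

lemma SM_dim: "state_matrix \<alpha> \<beta> \<gamma> n (diagQ n w) \<in> carrier_mat (2*n) (2*n)"
  unfolding state_matrix_def carrier_mat_def by simp

definition cc :: "real \<Rightarrow> real \<Rightarrow> real \<Rightarrow> real \<Rightarrow> real" where
  "cc \<alpha> \<beta> \<gamma> x = - \<beta> + \<gamma> * \<alpha> * x"
definition ee :: "real \<Rightarrow> real \<Rightarrow> real \<Rightarrow> real \<Rightarrow> real" where
  "ee \<alpha> \<beta> \<gamma> x = (1 + \<beta>) - (1 + \<gamma>) * \<alpha> * x"

lemma SM_idx:
  assumes "i < 2*n" "j < 2*n"
  shows "state_matrix \<alpha> \<beta> \<gamma> n (diagQ n w) $$ (i,j) =
    (if i < n then (if j = n + i then 1 else 0)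
     else if j = i - n then cc \<alpha> \<beta> \<gamma> (w (i-n))
     else if j = i then ee \<alpha> \<beta> \<gamma> (w (i-n)) else 0)"
proof -
  have *: "state_matrix \<alpha> \<beta> \<gamma> n (diagQ n w) $$ (i,j) =
      (if i < n then
      if j < n then 0\<^sub>m n n $$ (i,j) else 1\<^sub>m n $$ (i,j - n)
      else if j < n then ((- \<beta>) \<cdot>\<^sub>m 1\<^sub>m n + (\<gamma> * \<alpha>) \<cdot>\<^sub>m diagQ n w) $$ (i - n, j)
      else ((1 + \<beta>) \<cdot>\<^sub>m 1\<^sub>m n + (- ((1 + \<gamma>) * \<alpha>)) \<cdot>\<^sub>m diagQ n w) $$ (i - n, j - n))"
    unfolding state_matrix_def using assms by (subst index_mat_four_block) auto
  show ?thesis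
  proof (cases "i < n")
    case True
    then show ?thesis unfolding * using assms by auto
  next
    case False
    have in1: "i - n < n" using assms False by auto
    show ?thesis
    proof (cases "j < n")
      case True
      then show ?thesis unfolding * cc_def using assms False in1 by auto
    next
      case F2: False
      have "j - n < n" using assms by auto
      then show ?thesis unfolding * ee_def using assms False F2 in1 by auto
    qed
  qed
qed

definition CM where "CM \<alpha> \<beta> \<gamma> n w = map_mat complex_of_real (state_matrix \<alpha> \<beta> \<gamma> n (diagQ n w))"

lemma CM_dim: "CM \<alpha> \<beta> \<gamma> n w \<in> carrier_mat (2*n) (2*n)"
  using SM_dim unfolding CM_def by auto

lemma CM_idx: "i < 2*n \<Longrightarrow> j < 2*n \<Longrightarrow> CM \<alpha> \<beta> \<gamma> n w $$ (i,j) = complex_of_real (state_matrix \<alpha> \<beta> \<gamma> n (diagQ n w) $$ (i,j))"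
  unfolding CM_def using SM_dim[of \<alpha> \<beta> \<gamma> n w] by (subst index_map_mat) auto

lemma CM_mult_lo:
  assumes "i < n" "dim_vec v = 2*n"
  shows "(CM \<alpha> \<beta> \<gamma> n w *\<^sub>v v) $ i = v $ (n+i)"
proof -
  have "(CM \<alpha> \<beta> \<gamma> n w *\<^sub>v v) $ i = (\<Sum>j\<in>{0..<2*n}. CM \<alpha> \<beta> \<gamma> n w $$ (i,j) * v $ j)"
    using assms CM_dim[of \<alpha> \<beta> \<gamma> n w] by (simp add: scalar_prod_def)
  also have "\<dots> = (\<Sum>j\<in>{0..<2*n}. (if j = n + i then v $ j else 0))"
    apply (rule sum.cong, rule refl)
    using assms by (simp add: CM_idx SM_idx)
  also have "\<dots> = v $ (n+i)" using assms by (simp add: sum.delta)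
  finally show ?thesis .
qed

lemma CM_mult_hi:
  assumes "p < n" "dim_vec v = 2*n"
  shows "(CM \<alpha> \<beta> \<gamma> n w *\<^sub>v v) $ (n+p) =
     complex_of_real (cc \<alpha> \<beta> \<gamma> (w p)) * v $ p + complex_of_real (ee \<alpha> \<beta> \<gamma> (w p)) * v $ (n+p)"
proof -
  have "(CM \<alpha> \<beta> \<gamma> n w *\<^sub>v v) $ (n+p) = (\<Sum>j\<in>{0..<2*n}. CM \<alpha> \<beta> \<gamma> n w $$ (n+p,j) * v $ j)"
    using assms CM_dim[of \<alpha> \<beta> \<gamma> n w] by (simp add: scalar_prod_def)
  also have "\<dots> = (\<Sum>j\<in>{0..<2*n}. (if j = p then complex_of_real (cc \<alpha> \<beta> \<gamma> (w p)) * v $ j else 0)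
        + (if j = n + p then complex_of_real (ee \<alpha> \<beta> \<gamma> (w p)) * v $ j else 0))"
    apply (rule sum.cong, rule refl)
    using assms by (simp add: CM_idx SM_idx)
  also have "\<dots> = complex_of_real (cc \<alpha> \<beta> \<gamma> (w p)) * v $ p + complex_of_real (ee \<alpha> \<beta> \<gamma> (w p)) * v $ (n+p)"
    using assms by (simp add: sum.distrib sum.delta)
  finally show ?thesis .
qed

lemma cc_eq: "cc \<alpha> \<beta> \<gamma> x = - a_fun \<alpha> \<beta> \<gamma> x" unfolding cc_def a_fun_def by simp
lemma ee_eq: "ee \<alpha> \<beta> \<gamma> x = - b_fun \<alpha> \<beta> \<gamma> x" unfolding ee_def b_fun_def by simp

definition isroot :: "real \<Rightarrow> real \<Rightarrow> real \<Rightarrow> real \<Rightarrow> complex \<Rightarrow> bool" where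
  "isroot \<alpha> \<beta> \<gamma> x z \<longleftrightarrow> z^2 + complex_of_real (b_fun \<alpha> \<beta> \<gamma> x) * z + complex_of_real (a_fun \<alpha> \<beta> \<gamma> x) = 0"

lemma root_eig:
  assumes "p < n" "isroot \<alpha> \<beta> \<gamma> (w p) z"
  shows "eigenvalue (CM \<alpha> \<beta> \<gamma> n w) z"
proof -
  define v :: "complex vec" where "v = vec (2*n) (\<lambda>i. if i = p then 1 else if i = n + p then z else 0)"
  have dv: "dim_vec v = 2*n" unfolding v_def by simp
  have dr: "dim_row (CM \<alpha> \<beta> \<gamma> n w) = 2*n" using CM_dim[of \<alpha> \<beta> \<gamma> n w] by auto
  have nz: "v \<noteq> 0\<^sub>v (2*n)"
  proof
    assume "v = 0\<^sub>v (2*n)"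
    hence "v $ p = 0\<^sub>v (2*n) $ p" by simp
    thus False using assms unfolding v_def by simp
  qed
  have rt: "complex_of_real (cc \<alpha> \<beta> \<gamma> (w p)) + complex_of_real (ee \<alpha> \<beta> \<gamma> (w p)) * z = z * z"
  proof -
    let ?A = "complex_of_real (a_fun \<alpha> \<beta> \<gamma> (w p))" and ?B = "complex_of_real (b_fun \<alpha> \<beta> \<gamma> (w p))"
    have h: "z^2 + ?B * z + ?A = 0" using assms(2) unfolding isroot_def .
    have "z * z = (z^2 + ?B * z + ?A) - ?B * z - ?A" by (simp add: power2_eq_square)
    also have "\<dots> = - ?A + (- ?B) * z" using h by simp
    finally show ?thesis unfolding cc_eq ee_eq by simp
  qed
  have "CM \<alpha> \<beta> \<gamma> n w *\<^sub>v v = z \<cdot>\<^sub>v v"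
  proof (rule eq_vecI)
    fix i assume i: "i < dim_vec (z \<cdot>\<^sub>v v)"
    hence i2: "i < 2*n" using dv by simp
    show "(CM \<alpha> \<beta> \<gamma> n w *\<^sub>v v) $ i = (z \<cdot>\<^sub>v v) $ i"
    proof (cases "i < n")
      case True
      have e1: "v $ (n+i) = (if i = p then z else 0)" unfolding v_def using True assms(1) by simp
      have e2: "v $ i = (if i = p then 1 else 0)" unfolding v_def using True i2 by simp
      have e3: "(z \<cdot>\<^sub>v v) $ i = z * v $ i" using i2 dv by simp
      show ?thesis unfolding CM_mult_lo[OF True dv] e3 e1 e2 by simp
    next
      case False
      define q where "q = i - n"
      have q: "i = n + q" "q < n" using False i2 by (simp_all add: q_def)
      have "(CM \<alpha> \<beta> \<gamma> n w *\<^sub>v v) $ i = complex_of_real (cc \<alpha> \<beta> \<gamma> (w q)) * v $ q + complex_of_real (ee \<alpha> \<beta> \<gamma> (w q)) * v $ (n+q)"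
        using CM_mult_hi[OF q(2) dv] q by simp
      also have "\<dots> = (z \<cdot>\<^sub>v v) $ i"
      proof -
        have e1: "v $ (n+q) = (if q = p then z else 0)" unfolding v_def using q assms(1) by simp
        have e2: "v $ q = (if q = p then 1 else 0)" unfolding v_def using q by simp
        have e3: "(z \<cdot>\<^sub>v v) $ i = z * v $ (n+q)" using i2 dv q by simp
        show ?thesis unfolding e3 e1 e2 using rt by simp
      qed
      finally show ?thesis .
    qed
  qed (simp add: dv dr)
  moreover have "v \<in> carrier_vec (2*n)" using dv unfolding carrier_vec_def by blast
  ultimately have "eigenvector (CM \<alpha> \<beta> \<gamma> n w) v z" using nz unfolding eigenvector_def dr by blast
  thus ?thesis unfolding eigenvalue_def by blast
qed

lemma eig_root:
  assumes "eigenvalue (CM \<alpha> \<beta> \<gamma> n w) k"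
  shows "\<exists>p<n. isroot \<alpha> \<beta> \<gamma> (w p) k"
proof -
  have dr: "dim_row (CM \<alpha> \<beta> \<gamma> n w) = 2*n" using CM_dim[of \<alpha> \<beta> \<gamma> n w] by auto
  obtain v where v: "v \<in> carrier_vec (2*n)" "v \<noteq> 0\<^sub>v (2*n)" "CM \<alpha> \<beta> \<gamma> n w *\<^sub>v v = k \<cdot>\<^sub>v v"
    using assms unfolding eigenvalue_def eigenvector_def dr by blast
  have dv: "dim_vec v = 2*n" using v(1) unfolding carrier_vec_def by blast
  have lo: "v $ (n+p) = k * v $ p" if "p < n" for p
  proof -
    have "v $ (n+p) = (CM \<alpha> \<beta> \<gamma> n w *\<^sub>v v) $ p" using CM_mult_lo[OF that dv] by simp
    also have "\<dots> = k * v $ p" unfolding v(3) using that dv by simp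
    finally show ?thesis .
  qed
  have hi: "complex_of_real (cc \<alpha> \<beta> \<gamma> (w p)) * v $ p + complex_of_real (ee \<alpha> \<beta> \<gamma> (w p)) * v $ (n+p) = k * v $ (n+p)" if "p < n" for p
  proof -
    have "complex_of_real (cc \<alpha> \<beta> \<gamma> (w p)) * v $ p + complex_of_real (ee \<alpha> \<beta> \<gamma> (w p)) * v $ (n+p) = (CM \<alpha> \<beta> \<gamma> n w *\<^sub>v v) $ (n+p)" using CM_mult_hi[OF that dv] by simp
    also have "\<dots> = k * v $ (n+p)" unfolding v(3) using that dv by simp
    finally show ?thesis .
  qed
  obtain i where i: "i < 2*n" "v $ i \<noteq> 0"
  proof -
    have "\<exists>i<2*n. v $ i \<noteq> 0"
    proof (rule ccontr)
      assume "\<not> (\<exists>i<2*n. v $ i \<noteq> 0)"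
      hence "v = 0\<^sub>v (2*n)" using dv by (intro eq_vecI) auto
      thus False using v(2) by blast
    qed
    thus ?thesis using that by blast
  qed
  define p where "p = (if i < n then i else i - n)"
  have p: "p < n" using i(1) unfolding p_def by auto
  have vp: "v $ p \<noteq> 0"
  proof (cases "i < n")
    case True thus ?thesis using i unfolding p_def by simp
  next
    case False
    hence "i = n + p" unfolding p_def by simp
    hence "v $ (n+p) \<noteq> 0" using i by simp
    thus ?thesis using lo[OF p] by auto
  qed
  have "(complex_of_real (cc \<alpha> \<beta> \<gamma> (w p)) + complex_of_real (ee \<alpha> \<beta> \<gamma> (w p)) * k - k * k) * v $ p = 0"
    using hi[OF p] unfolding lo[OF p] by (simp add: algebra_simps)
  hence "complex_of_real (cc \<alpha> \<beta> \<gamma> (w p)) + complex_of_real (ee \<alpha> \<beta> \<gamma> (w p)) * k - k * k = 0"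
    using vp by simp
  hence h0: "- complex_of_real (a_fun \<alpha> \<beta> \<gamma> (w p)) + (- complex_of_real (b_fun \<alpha> \<beta> \<gamma> (w p))) * k - k * k = 0"
    unfolding cc_eq ee_eq by simp
  have "k^2 + complex_of_real (b_fun \<alpha> \<beta> \<gamma> (w p)) * k + complex_of_real (a_fun \<alpha> \<beta> \<gamma> (w p))
     = - (- complex_of_real (a_fun \<alpha> \<beta> \<gamma> (w p)) + (- complex_of_real (b_fun \<alpha> \<beta> \<gamma> (w p))) * k - k * k)"
    by (simp add: algebra_simps power2_eq_square)
  hence "isroot \<alpha> \<beta> \<gamma> (w p) k" unfolding isroot_def h0 by (simp only: h0 minus_zero)
  thus ?thesis using p by blast
qed

lemma diagQ_mult: "i < n \<Longrightarrow> dim_vec v = n \<Longrightarrow> (diagQ n w *\<^sub>v v) $ i = w i * v $ i"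
proof -
  assume a: "i < n" "dim_vec v = n"
  have "(diagQ n w *\<^sub>v v) $ i = (\<Sum>j\<in>{0..<n}. diagQ n w $$ (i,j) * v $ j)"
    using a by (simp add: scalar_prod_def)
  also have "\<dots> = (\<Sum>j\<in>{0..<n}. if j = i then w i * v $ j else 0)"
    by (rule sum.cong, rule refl) (use a in auto)
  also have "\<dots> = w i * v $ i" using a by (simp add: sum.delta)
  finally show ?thesis .
qed

lemma diagQ_eig_bound:
  assumes "eigenvalue (diagQ n w) k"
  shows "\<exists>i<n. k = w i"
proof -
  obtain v where v: "v \<in> carrier_vec n" "v \<noteq> 0\<^sub>v n" "diagQ n w *\<^sub>v v = k \<cdot>\<^sub>v v"
    using assms unfolding eigenvalue_def eigenvector_def diagQ_dim by blast
  have dv: "dim_vec v = n" using v(1) unfolding carrier_vec_def by blast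
  obtain i where i: "i < n" "v $ i \<noteq> 0"
  proof -
    have "\<exists>i<n. v $ i \<noteq> 0"
    proof (rule ccontr)
      assume "\<not> (\<exists>i<n. v $ i \<noteq> 0)"
      hence "v = 0\<^sub>v n" using dv by (intro eq_vecI) auto
      thus False using v(2) by blast
    qed
    thus ?thesis using that by blast
  qed
  have "w i * v $ i = k * v $ i"
    using diagQ_mult[OF i(1) dv, of w] unfolding v(3) using i dv by simp
  hence "k = w i" using i(2) by simp
  thus ?thesis using i by blast
qed

lemma diagQ_eig:
  assumes "i < n"
  shows "eigenvalue (diagQ n w) (w i)"
proof -
  have "diagQ n w *\<^sub>v unit_vec n i = w i \<cdot>\<^sub>v unit_vec n i"
    by (rule eq_vecI) (auto simp: diagQ_mult assms)
  moreover have "unit_vec n i \<noteq> (0\<^sub>v n :: real vec)"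
  proof
    assume "unit_vec n i = (0\<^sub>v n :: real vec)"
    hence "unit_vec n i $ i = (0\<^sub>v n :: real vec) $ i" by simp
    thus False using assms by simp
  qed
  moreover have "unit_vec n i \<in> carrier_vec n" by simp
  ultimately show ?thesis unfolding eigenvalue_def eigenvector_def diagQ_dim by blast
qed

lemma diagQ_class:
  assumes m: "0 < m" and w: "\<And>i. i < n \<Longrightarrow> m \<le> w i \<and> w i \<le> L"
    and ia: "ia < n" "w ia = m" and ib: "ib < n" "w ib = L"
  shows "quad_class_hessian m L n (diagQ n w)"
proof -
  have tr: "transpose_mat (diagQ n w) = diagQ n w"
    by (rule eq_matI) auto
  have pd: "v \<bullet> (diagQ n w *\<^sub>v v) > 0" if v: "v \<in> carrier_vec n" "v \<noteq> 0\<^sub>v n" for v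
  proof -
    have dv: "dim_vec v = n" using v(1) unfolding carrier_vec_def by blast
    obtain i where i: "i < n" "v $ i \<noteq> 0"
    proof -
      have "\<exists>i<n. v $ i \<noteq> 0"
      proof (rule ccontr)
        assume "\<not> (\<exists>i<n. v $ i \<noteq> 0)"
        hence "v = 0\<^sub>v n" using dv by (intro eq_vecI) auto
        thus False using v(2) by blast
      qed
      thus ?thesis using that by blast
    qed
    have "v \<bullet> (diagQ n w *\<^sub>v v) = (\<Sum>j\<in>{0..<n}. v $ j * (w j * v $ j))"
    proof -
      have "v \<bullet> (diagQ n w *\<^sub>v v) = (\<Sum>j\<in>{0..<n}. v $ j * (diagQ n w *\<^sub>v v) $ j)"
        unfolding scalar_prod_def by simp
      also have "\<dots> = (\<Sum>j\<in>{0..<n}. v $ j * (w j * v $ j))"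
        by (rule sum.cong[OF refl]) (simp add: diagQ_mult[OF _ dv] del: index_mult_mat_vec)
      finally show ?thesis .
    qed
    also have "\<dots> > 0"
    proof (rule sum_pos2[where i = i])
      show "finite {0..<n}" by simp
      show "i \<in> {0..<n}" using i by simp
      have "w i > 0" using w[OF i(1)] m by linarith
      thus "0 < v $ i * (w i * v $ i)" using i(2)
        by (metis mult.left_commute mult_pos_pos not_real_square_gt_zero)
      show "\<And>j. j \<in> {0..<n} \<Longrightarrow> 0 \<le> v $ j * (w j * v $ j)"
      proof -
        fix j assume "j \<in> {0..<n}"
        hence "w j \<ge> 0" using w[of j] m by auto
        thus "0 \<le> v $ j * (w j * v $ j)"
          by (metis mult.left_commute mult_nonneg_nonneg zero_le_square)
      qed
    qed
    finally show ?thesis .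
  qed
  show ?thesis unfolding quad_class_hessian_def
    using tr pd diagQ_eig[OF ia(1), of w] diagQ_eig[OF ib(1), of w] ia(2) ib(2)
      diagQ_eig_bound[of n w] w
    by (metis diagQ_dim(1))
qed

lemma root_comp:
  fixes a b :: real and z :: complex
  assumes "z^2 + complex_of_real b * z + complex_of_real a = 0"
  shows "(Im z = 0 \<and> (Re z)^2 + b * Re z + a = 0) \<or> (Re z = - b / 2 \<and> a = (Re z)^2 + (Im z)^2)"
proof -
  have e1: "(Re z)^2 - (Im z)^2 + b * Re z + a = 0"
    using arg_cong[OF assms, of Re] by (simp add: power2_eq_square)
  have e2: "Im z * (2 * Re z + b) = 0"
    using arg_cong[OF assms, of Im] by (simp add: power2_eq_square algebra_simps)
  show ?thesis
  proof (cases "Im z = 0")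
    case True then show ?thesis using e1 by simp
  next
    case False
    hence x: "Re z = - b / 2" using e2 by simp
    have "a = (Im z)^2 - (Re z)^2 - b * Re z" using e1 by simp
    also have "\<dots> = (Re z)^2 + (Im z)^2" unfolding x by (simp add: power2_eq_square field_simps)
    finally show ?thesis using x by simp
  qed
qed

lemma real_root:
  fixes a b x :: real
  assumes "x^2 + b * x + a = 0"
  shows "(complex_of_real x)^2 + complex_of_real b * complex_of_real x + complex_of_real a = 0"
proof -
  have "(complex_of_real x)^2 + complex_of_real b * complex_of_real x + complex_of_real a = complex_of_real (x^2 + b * x + a)"
    by simp
  thus ?thesis using assms by simp
qed

lemma cplx_root:
  fixes a b y :: real
  assumes "a = b^2 / 4 + y^2"
  shows "(Complex (-b/2) y)^2 + complex_of_real b * Complex (-b/2) y + complex_of_real a = 0"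
  using assms by (simp add: complex_eq_iff power2_eq_square field_simps)

lemma sq_ge_4: "(1 + a)^2 \<ge> 4 * (a::real)"
proof -
  have "(1 + a)^2 - 4 * a = (1 - a)^2" by (simp add: power2_eq_square algebra_simps)
  thus ?thesis by (metis diff_ge_0_iff_ge zero_le_power2)
qed

lemma stable:
  fixes a b \<rho> :: real
  assumes S: "\<And>z. z^2 + complex_of_real b * z + complex_of_real a = 0 \<Longrightarrow> cmod z \<le> \<rho>"
    and r: "0 < \<rho>" "\<rho> < 1"
  shows "1 + a + b > 0 \<and> 1 + a - b > 0 \<and> 1 - a > 0"
proof (cases "b^2 - 4 * a \<ge> 0")
  case True
  define s where "s = sqrt (b^2 - 4 * a)"
  have s2: "s^2 = b^2 - 4 * a" unfolding s_def using True by simp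
  define r1 where "r1 = (-b + s) / 2"
  define r2 where "r2 = (-b - s) / 2"
  have a_eq: "a = r1 * r2" unfolding r1_def r2_def using s2 by (simp add: power2_eq_square field_simps)
  have b_eq: "b = - (r1 + r2)" unfolding r1_def r2_def by (simp add: field_simps)
  have "r1^2 + b * r1 + a = 0" unfolding a_eq b_eq by (simp add: power2_eq_square algebra_simps)
  hence "cmod (complex_of_real r1) \<le> \<rho>" using S real_root by blast
  hence h1: "\<bar>r1\<bar> \<le> \<rho>" by simp
  have "r2^2 + b * r2 + a = 0" unfolding a_eq b_eq by (simp add: power2_eq_square algebra_simps)
  hence "cmod (complex_of_real r2) \<le> \<rho>" using S real_root by blast
  hence h2: "\<bar>r2\<bar> \<le> \<rho>" by simp
  have "1 + a + b = (1 - r1) * (1 - r2)" unfolding a_eq b_eq by (simp add: algebra_simps)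
  moreover have "(1 - r1) * (1 - r2) > 0" using h1 h2 r by (intro mult_pos_pos) auto
  moreover have "1 + a - b = (1 + r1) * (1 + r2)" unfolding a_eq b_eq by (simp add: algebra_simps)
  moreover have "(1 + r1) * (1 + r2) > 0" using h1 h2 r by (intro mult_pos_pos) auto
  moreover have "\<bar>r1 * r2\<bar> < 1"
  proof -
    have "\<bar>r1 * r2\<bar> = \<bar>r1\<bar> * \<bar>r2\<bar>" by (simp add: abs_mult)
    also have "\<dots> \<le> \<rho> * \<rho>" using h1 h2 by (intro mult_mono) auto
    also have "\<dots> < 1 * 1" using r by (intro mult_strict_mono) auto
    finally show ?thesis by simp
  qed
  ultimately show ?thesis unfolding a_eq by auto
next
  case False
  define y where "y = sqrt (a - b^2 / 4)"
  have y2: "y^2 = a - b^2/4" unfolding y_def using False by simp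
  have ay: "a = b^2 / 4 + y^2" using y2 by simp
  have "cmod (Complex (-b/2) y) \<le> \<rho>" using S cplx_root[OF ay] by blast
  hence "sqrt ((-b/2)^2 + y^2) \<le> \<rho>" by (simp add: cmod_def)
  moreover have "(-b/2)^2 + y^2 = a" using ay by (simp add: power2_eq_square)
  ultimately have "sqrt a \<le> \<rho>" by simp
  moreover have a0: "a > 0" using False by (smt (verit) zero_le_power2)
  ultimately have "a \<le> \<rho>^2" by (metis real_le_rsqrt real_sqrt_le_iff sqrt_le_D)
  moreover have "\<rho>^2 < 1" using r by (simp add: power_less_one_iff)
  ultimately have h: "1 - a > 0" by simp
  have d: "1 + a + b > 0"
  proof (rule ccontr)
    assume "\<not> 1 + a + b > 0"
    hence "-b \<ge> 1 + a" by simp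
    hence "(-b)^2 \<ge> (1 + a)^2" using a0 by (intro power_mono) auto
    thus False using sq_ge_4[of a] False by simp
  qed
  have l: "1 + a - b > 0"
  proof (rule ccontr)
    assume "\<not> 1 + a - b > 0"
    hence "b \<ge> 1 + a" by simp
    hence "b^2 \<ge> (1 + a)^2" using a0 by (intro power_mono) auto
    thus False using sq_ge_4[of a] False by simp
  qed
  show ?thesis using h d l by simp
qed

definition Jf :: "real \<Rightarrow> real \<Rightarrow> real \<Rightarrow> real" where
  "Jf \<sigma> a b = \<sigma>^2 * ((a + b + 1) + (a - b + 1)) / (2 * (a + b + 1) * (1 - a) * (a - b + 1))"

lemma J_hat_eq: "J_hat \<sigma> \<alpha> \<beta> \<gamma> x = Jf \<sigma> (a_fun \<alpha> \<beta> \<gamma> x) (b_fun \<alpha> \<beta> \<gamma> x)"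
  unfolding J_hat_def Jf_def d_fun_def l_fun_def h_fun_def by simp

lemma Jf_lower:
  fixes a b M :: real
  assumes pos: "1 + a + b > 0" "1 + a - b > 0" "1 - a > 0" and M: "M > 0"
    and P: "(1 + a + b) * (1 - a) * (1 + a - b) \<le> (1 + a) * M"
  shows "\<sigma>^2 / M \<le> Jf \<sigma> a b"
proof -
  define P where "P = (1 + a + b) * (1 - a) * (1 + a - b)"
  have P0: "P > 0" unfolding P_def using pos by simp
  have J: "Jf \<sigma> a b = \<sigma>^2 * (1 + a) / P"
  proof -
    have n: "(a + b + 1) + (a - b + 1) = 2 * (1 + a)" by simp
    have "Jf \<sigma> a b = (2 * (\<sigma>^2 * (1 + a))) / (2 * ((a + b + 1) * (1 - a) * (a - b + 1)))"
      unfolding Jf_def n by (simp only: mult.assoc mult.left_commute)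
    also have "\<dots> = \<sigma>^2 * (1 + a) / ((a + b + 1) * (1 - a) * (a - b + 1))"
      by (rule mult_divide_mult_cancel_left) simp
    finally show ?thesis unfolding P_def by (simp add: add.commute add.left_commute)
  qed
  have "\<sigma>^2 * P \<le> \<sigma>^2 * ((1 + a) * M)"
    using P unfolding P_def[symmetric] by (intro mult_left_mono) auto
  hence "\<sigma>^2 / M \<le> \<sigma>^2 * (1 + a) / P" using P0 M by (simp add: divide_simps mult.assoc mult.commute mult.left_commute)
  thus ?thesis unfolding J .
qed

lemma Jmin:
  fixes a b :: real
  assumes pos: "1 + a + b > 0" "1 + a - b > 0" "1 - a > 0"
  shows "\<sigma>^2 \<le> Jf \<sigma> a b"
proof -
  have dl: "(1 + a + b) * (1 + a - b) \<le> (1 + a)^2"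
    by (simp add: power2_eq_square algebra_simps)
  have "(1 + a + b) * (1 - a) * (1 + a - b) = ((1 + a + b) * (1 + a - b)) * (1 - a)" by simp
  also have "\<dots> \<le> (1 + a)^2 * (1 - a)" using dl pos by (intro mult_right_mono) auto
  also have "\<dots> = (1 + a) * (1 - a^2)" by (simp add: power2_eq_square algebra_simps)
  also have "\<dots> \<le> (1 + a) * 1" using pos by (intro mult_left_mono) auto
  finally show ?thesis using Jf_lower[OF pos, of 1] by simp
qed

lemma Jmax:
  fixes a b \<rho> :: real
  assumes S: "\<And>z. z^2 + complex_of_real b * z + complex_of_real a = 0 \<Longrightarrow> cmod z \<le> \<rho>"
    and r: "0 < \<rho>" "\<rho> < 1"
    and z: "z^2 + complex_of_real b * z + complex_of_real a = 0" "cmod z = \<rho>"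
  shows "\<sigma>^2 / (2 * (1 + \<rho>)^2 * (1 - \<rho>)) \<le> Jf \<sigma> a b"
proof -
  have st: "1 + a + b > 0 \<and> 1 + a - b > 0 \<and> 1 - a > 0"
    by (rule stable[where a=a and b=b and \<rho>=\<rho>]) (use S r in auto)
  have pos: "1 + a + b > 0" "1 + a - b > 0" "1 - a > 0" using st by auto
  have M: "2 * (1 + \<rho>)^2 * (1 - \<rho>) > 0" using r by simp
  have r2: "\<rho>^2 < 1" using r by (simp add: power_less_one_iff)
  show ?thesis
  proof (rule Jf_lower[OF pos M])
    consider "Im z = 0 \<and> (Re z)^2 + b * Re z + a = 0" | "Re z = - b / 2 \<and> a = (Re z)^2 + (Im z)^2"
      using root_comp[OF z(1)] by blast
    then show "(1 + a + b) * (1 - a) * (1 + a - b) \<le> (1 + a) * (2 * (1 + \<rho>)^2 * (1 - \<rho>))"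
    proof cases
      case 2
      have "sqrt ((Re z)^2 + (Im z)^2) = \<rho>" using z(2) by (simp add: cmod_def)
      hence a: "a = \<rho>^2" using 2 r by (metis real_sqrt_pow2 zero_le_power2 add_nonneg_nonneg)
      have dl: "(1 + a + b) * (1 + a - b) \<le> (1 + a)^2"
        by (simp add: power2_eq_square algebra_simps)
      have "(1 + a + b) * (1 - a) * (1 + a - b) = ((1 + a + b) * (1 + a - b)) * (1 - a)" by simp
      also have "\<dots> \<le> (1 + a)^2 * (1 - a)" using dl pos by (intro mult_right_mono) auto
      also have "\<dots> = (1 + a) * ((1 + \<rho>^2) * (1 - \<rho>^2))" unfolding a by (simp add: power2_eq_square)
      also have "\<dots> \<le> (1 + a) * (2 * (1 + \<rho>)^2 * (1 - \<rho>))"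
      proof (rule mult_left_mono)
        have "(1 + \<rho>^2) * (1 - \<rho>^2) = ((1 + \<rho>^2) * (1 + \<rho>)) * (1 - \<rho>)" by (simp add: power2_eq_square algebra_simps)
        also have "\<dots> \<le> (2 * (1 + \<rho>) * (1 + \<rho>)) * (1 - \<rho>)"
        proof (rule mult_right_mono)
          have "1 + \<rho>^2 \<le> 2 * (1 + \<rho>)" using r2 r by simp
          thus "(1 + \<rho>^2) * (1 + \<rho>) \<le> 2 * (1 + \<rho>) * (1 + \<rho>)" using r by (intro mult_right_mono) auto
        qed (use r in simp)
        also have "\<dots> = 2 * (1 + \<rho>)^2 * (1 - \<rho>)" by (simp add: power2_eq_square)
        finally show "(1 + \<rho>^2) * (1 - \<rho>^2) \<le> 2 * (1 + \<rho>)^2 * (1 - \<rho>)" .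
      qed (use a in simp)
      finally show ?thesis .
    next
      case 1
      define x where "x = Re z"
      have zx: "z = complex_of_real x" using 1 unfolding x_def by (simp add: complex_eq_iff)
      have ax: "\<bar>x\<bar> = \<rho>" using z(2) unfolding zx by simp
      define t where "t = - b - x"
      have b_eq: "b = - (x + t)" unfolding t_def by simp
      have a_eq: "a = x * t" using 1 unfolding x_def[symmetric] t_def by (simp add: power2_eq_square algebra_simps)
      have "t^2 + b * t + a = 0" unfolding a_eq b_eq by (simp add: power2_eq_square algebra_simps)
      hence "cmod (complex_of_real t) \<le> \<rho>" using S real_root by blast
      hence at: "\<bar>t\<bar> \<le> \<rho>" by simp
      define s where "s = \<bar>t\<bar>"
      have s0: "0 \<le> s" "s \<le> \<rho>" using at unfolding s_def by auto
      have xt: "x * t \<ge> - (\<rho> * s)"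
      proof -
        have "\<bar>x * t\<bar> = \<rho> * s" unfolding s_def abs_mult ax ..
        thus ?thesis by linarith
      qed
      have x2: "x^2 = \<rho>^2" using ax by (metis power2_abs)
      have t2: "t^2 = s^2" unfolding s_def by simp
      have "(1 + a + b) * (1 - a) * (1 + a - b) = (1 - x^2) * ((1 - t^2) * (1 - x * t))"
        unfolding a_eq b_eq by (simp add: power2_eq_square algebra_simps)
      also have "\<dots> = (1 - \<rho>^2) * (((1 - s) * (1 + s)) * (1 - x * t))"
        unfolding x2 t2 by (simp add: power2_eq_square algebra_simps)
      also have "\<dots> \<le> (1 - \<rho>^2) * (2 * (1 + \<rho>) * (1 + x * t))"
      proof (rule mult_left_mono)
        have "((1 - s) * (1 + s)) * (1 - x * t) \<le> ((1 - s) * (1 + s)) * (1 + \<rho> * s)"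
          using xt s0 r by (intro mult_left_mono) auto
        also have "\<dots> \<le> ((1 - \<rho> * s) * (1 + \<rho>)) * 2"
        proof (rule mult_mono)
          have "\<rho> * s \<le> 1 * s" using r s0 by (intro mult_right_mono) auto
          hence "1 - s \<le> 1 - \<rho> * s" by simp
          thus "(1 - s) * (1 + s) \<le> (1 - \<rho> * s) * (1 + \<rho>)" using s0 r by (intro mult_mono) auto
          have "\<rho> * s \<le> 1 * 1" using r s0 by (intro mult_mono) auto
          thus "1 + \<rho> * s \<le> 2" by simp
          show "0 \<le> (1 - \<rho> * s) * (1 + \<rho>)" using \<open>\<rho> * s \<le> 1 * 1\<close> r by simp
          show "0 \<le> 1 + \<rho> * s" using r s0 by simp
        qed
        also have "\<dots> \<le> 2 * (1 + \<rho>) * (1 + x * t)"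
        proof -
          have h: "0 \<le> (2 * (1 + \<rho>)) * (x * t + \<rho> * s)" using xt r by (intro mult_nonneg_nonneg) auto
          have "2 * (1 + \<rho>) * (1 + x * t) - ((1 - \<rho> * s) * (1 + \<rho>)) * 2 = (2 * (1 + \<rho>)) * (x * t + \<rho> * s)"
            by (simp add: algebra_simps)
          thus ?thesis using h by linarith
        qed
        finally show "((1 - s) * (1 + s)) * (1 - x * t) \<le> 2 * (1 + \<rho>) * (1 + x * t)" .
      qed (use r2 in simp)
      also have "\<dots> = (1 + a) * (2 * (1 + \<rho>)^2 * (1 - \<rho>))"
        unfolding a_eq by (simp add: power2_eq_square algebra_simps)
      finally show ?thesis .
    qed
  qed
qed

theorem proposition6:
  fixes m L \<alpha> \<beta> \<gamma> \<sigma>w Ts \<rho> :: real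
  assumes "0 < m" and "m \<le> L"
    and "\<sigma>w \<ge> 0"
    and "\<rho> = 1 - 1 / Ts" and "0 < \<rho>" and "\<rho> < 1"
    and "\<And>n Q. quad_class_hessian m L n Q \<Longrightarrow>
           spectral_radius (map_mat complex_of_real (state_matrix \<alpha> \<beta> \<gamma> n Q)) = \<rho>"
  shows "(\<exists>lam\<in>{m..L}. (\<forall>mu\<in>{m..L}. J_hat \<sigma>w \<alpha> \<beta> \<gamma> mu \<le> J_hat \<sigma>w \<alpha> \<beta> \<gamma> lam) \<and>
             J_hat \<sigma>w \<alpha> \<beta> \<gamma> lam \<ge> \<sigma>w\<^sup>2 / (2 * (1 + \<rho>)\<^sup>2) * Ts)
       \<and> (\<exists>lam\<in>{m..L}. (\<forall>mu\<in>{m..L}. J_hat \<sigma>w \<alpha> \<beta> \<gamma> lam \<le> J_hat \<sigma>w \<alpha> \<beta> \<gamma> mu) \<and>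
             J_hat \<sigma>w \<alpha> \<beta> \<gamma> lam \<ge> \<sigma>w\<^sup>2)"
proof -
  note m = assms(1) and mL = assms(2) and rT = assms(4) and r = assms(5,6) and H = assms(7)
  define W where "W = (\<lambda>x::real. \<lambda>i::nat. if i = 0 then m else if i = 1 then x else L)"
  have cls: "quad_class_hessian m L 3 (diagQ 3 (W x))" if x: "x \<in> {m..L}" for x
    by (rule diagQ_class[where ia = 0 and ib = 2]) (use m mL x in \<open>auto simp: W_def\<close>)
  have SR: "spectral_radius (CM \<alpha> \<beta> \<gamma> 3 (W x)) = \<rho>" if x: "x \<in> {m..L}" for x
    unfolding CM_def using H[OF cls[OF x]] .
  have CMd: "CM \<alpha> \<beta> \<gamma> 3 (W x) \<in> carrier_mat 6 6" for x using CM_dim[of \<alpha> \<beta> \<gamma> 3 "W x"] by simp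
  have S: "cmod z \<le> \<rho>" if x: "x \<in> {m..L}" and z: "isroot \<alpha> \<beta> \<gamma> x z" for x z
  proof -
    have "isroot \<alpha> \<beta> \<gamma> (W x 1) z" using z by (simp add: W_def)
    hence "eigenvalue (CM \<alpha> \<beta> \<gamma> 3 (W x)) z" by (intro root_eig) auto
    hence "cmod z \<in> norm ` spectrum (CM \<alpha> \<beta> \<gamma> 3 (W x))" unfolding spectrum_def by auto
    from spectral_radius_mem_max(2)[OF CMd _ this] show ?thesis using SR[OF x] by simp
  qed
  have S': "\<And>z. z^2 + complex_of_real (b_fun \<alpha> \<beta> \<gamma> x) * z + complex_of_real (a_fun \<alpha> \<beta> \<gamma> x) = 0 \<Longrightarrow> cmod z \<le> \<rho>"
    if x: "x \<in> {m..L}" for x using S[OF x] unfolding isroot_def by blast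
  have st: "1 + a_fun \<alpha> \<beta> \<gamma> x + b_fun \<alpha> \<beta> \<gamma> x > 0 \<and> 1 + a_fun \<alpha> \<beta> \<gamma> x - b_fun \<alpha> \<beta> \<gamma> x > 0 \<and> 1 - a_fun \<alpha> \<beta> \<gamma> x > 0"
    if x: "x \<in> {m..L}" for x
    by (rule stable[where \<rho> = \<rho>]) (use S'[OF x] r in auto)
  obtain x0 k where x0: "x0 \<in> {m..L}" and k: "isroot \<alpha> \<beta> \<gamma> x0 k" "cmod k = \<rho>"
  proof -
    have mm: "m \<in> {m..L}" using mL by simp
    have "\<rho> \<in> norm ` spectrum (CM \<alpha> \<beta> \<gamma> 3 (W m))"
      using spectral_radius_mem_max(1)[OF CMd, of m] SR[OF mm] by simp
    then obtain k where k: "eigenvalue (CM \<alpha> \<beta> \<gamma> 3 (W m)) k" "cmod k = \<rho>"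
      unfolding spectrum_def by auto
    obtain p where p: "p < 3" "isroot \<alpha> \<beta> \<gamma> (W m p) k" using eig_root[OF k(1)] by blast
    have "W m p \<in> {m..L}" using mL by (simp add: W_def)
    thus ?thesis using that p k by blast
  qed
  have cont: "continuous_on {m..L} (\<lambda>x. J_hat \<sigma>w \<alpha> \<beta> \<gamma> x)"
  proof -
    have nz: "2 * d_fun \<alpha> \<beta> \<gamma> x * h_fun \<alpha> \<beta> \<gamma> x * l_fun \<alpha> \<beta> \<gamma> x \<noteq> 0" if x: "x \<in> {m..L}" for x
      using st[OF x] unfolding d_fun_def h_fun_def l_fun_def by (simp add: add.commute add.left_commute)
    show ?thesis unfolding J_hat_def
      by (intro continuous_on_divide) (use nz in \<open>auto simp: d_fun_def h_fun_def l_fun_def a_fun_def b_fun_def intro!: continuous_intros\<close>)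
  qed
  have ne: "{m..L} \<noteq> {}" using mL by simp
  obtain xM where xM: "xM \<in> {m..L}" "\<forall>y\<in>{m..L}. J_hat \<sigma>w \<alpha> \<beta> \<gamma> y \<le> J_hat \<sigma>w \<alpha> \<beta> \<gamma> xM"
    using continuous_attains_sup[OF compact_Icc ne cont] by blast
  obtain xm where xm: "xm \<in> {m..L}" "\<forall>y\<in>{m..L}. J_hat \<sigma>w \<alpha> \<beta> \<gamma> xm \<le> J_hat \<sigma>w \<alpha> \<beta> \<gamma> y"
    using continuous_attains_inf[OF compact_Icc ne cont] by blast
  have Ts: "Ts = 1 / (1 - \<rho>)"
  proof -
    have "1 / Ts = 1 - \<rho>" using rT by simp
    thus ?thesis by (metis inverse_eq_divide inverse_inverse_eq)
  qed
  have tgt: "\<sigma>w\<^sup>2 / (2 * (1 + \<rho>)\<^sup>2) * Ts = \<sigma>w^2 / (2 * (1 + \<rho>)^2 * (1 - \<rho>))"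
    unfolding Ts by simp
  have "\<sigma>w^2 / (2 * (1 + \<rho>)^2 * (1 - \<rho>)) \<le> J_hat \<sigma>w \<alpha> \<beta> \<gamma> x0"
    unfolding J_hat_eq
    by (rule Jmax[where z = k]) (use S'[OF x0] r k in \<open>auto simp: isroot_def\<close>)
  hence P1: "J_hat \<sigma>w \<alpha> \<beta> \<gamma> xM \<ge> \<sigma>w\<^sup>2 / (2 * (1 + \<rho>)\<^sup>2) * Ts"
    using xM x0 unfolding tgt by force
  have P2: "J_hat \<sigma>w \<alpha> \<beta> \<gamma> xm \<ge> \<sigma>w\<^sup>2"
    unfolding J_hat_eq by (rule Jmin) (use st[OF xm(1)] in auto)
  show ?thesis using xM xm P1 P2 by blast
qed
end
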